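(* Let $H$ be a graph with $1\le\delta(H)\le|V(H)|-2$ and let $\{\mathcal H_i\}_{i=1}^s$ be a $d$-sequence of $H$ with $Z=\min\{z_i(H): 2\le i\le s\}\le 0$. Let $T$ be a forest without isolated vertices of order at least $3$, let $P_T$ be the set of pendant vertices of $T$ adjacent to a vertex of degree at least $2$, and let $G=H+T$. If $|P_T|-|N_T(P_T)|\ge d_H-Z$, then $str(G)=|V(G)|+1$.
   Context: For a graph $G$ of order $p$, a numbering is a bijection $f:V(G)\to[1,p]$; $str_f(G)=\max\{f(u)+f(v): uv\in E(G)\}$ and $str(G)=\min_f str_f(G)$. $G+H$ is disjoint union; $N_T(S)$ is the set of all neighbours in $T$ of vertices of $S$; a pendant vertex has degree 1; $mK_1$ is the edgeless graph on $m$ vertices; $K_r$ the complete graph. $d$-sequence: Let $G$ have order $p$ with $1\le\delta(G)\le p-2$. Set $\mathcal G_1=G_1=G$, $m_1=0$. For each $i$, write $\mathcal G_i=m_iK_1+G_i$, where $m_i\ge0$ is the number of isolated vertices of $\mathcal G_i$ and $G_i$ has no isolated vertices. If $\mathcal G_i$ is neither of the form $mK_1$ ($m\ge1$) nor $mK_1+K_r$ ($m\ge0$, $r\ge2$), choose any vertex $u_i$ of $G_i$, put $d_i=\deg_{G_i}(u_i)$, and let $\mathcal G_{i+1}$ be obtained from $G_i$ by deleting $u_i$ together with all its neighbours in $G_i$. Stop at the first index $s$ ($s\ge 2$) for which $\mathcal G_s$ is $m_sK_1$ with $m_s\ge1$ (then set $d_s=0$) or $m_sK_1+K_r$ with $m_s\ge0$,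 $r\ge2$ (then $d_s=r-1$). The sequence $\{\mathcal G_i\}_{i=1}^s$ is a $d$-sequence of $G$. Write $d_G=d_1$, $y_j(G)=m_j+1-d_j$ and $z_i(G)=\sum_{j=2}^i y_j(G)$ for $2\le i\le s$. *)

theory Defs
  imports Main
begin

type_synonym 'a graph = "'a set \<times> 'a set set"

definition is_graph :: "'a graph \<Rightarrow> bool" where
  "is_graph G \<longleftrightarrow> finite (fst G) \<and>
     (\<forall>e\<in>snd G. \<exists>u v. e = {u, v} \<and> u \<noteq> v \<and> u \<in> fst G \<and> v \<in> fst G)"

definition deg :: "'a graph \<Rightarrow> 'a \<Rightarrow> nat" where
  "deg G v = card {u. {u, v} \<in> snd G}"

definition min_deg :: "'a graph \<Rightarrow> nat" where
  "min_deg G = Min (deg G ` fst G)"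

definition isolated :: "'a graph \<Rightarrow> 'a set" where
  "isolated G = {v \<in> fst G. \<forall>u. {u, v} \<notin> snd G}"

definition nonisol :: "'a graph \<Rightarrow> 'a set" where
  "nonisol G = fst G - isolated G"

definition nbhd_set :: "'a graph \<Rightarrow> 'a set \<Rightarrow> 'a set" where
  "nbhd_set G S = {u \<in> fst G. \<exists>v\<in>S. {u, v} \<in> snd G}"

definition closed_nbhd :: "'a graph \<Rightarrow> 'a \<Rightarrow> 'a set" where
  "closed_nbhd G u = insert u {v. {u, v} \<in> snd G}"

definition dstep :: "'a graph \<Rightarrow> 'a \<Rightarrow> 'a graph" where
  "dstep G u = (let W = nonisol G - closed_nbhd G u in (W, {e \<in> snd G. e \<subseteq> W}))"

text \<open>G is of the form m K_1 (m \<ge> 1) or m K_1 + K_r (m \<ge> 0, r \<ge> 2).\<close>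
definition stop_form :: "'a graph \<Rightarrow> bool" where
  "stop_form G \<longleftrightarrow> (snd G = {} \<and> fst G \<noteq> {}) \<or>
     (nonisol G \<noteq> {} \<and> (\<forall>u\<in>nonisol G. \<forall>v\<in>nonisol G. u \<noteq> v \<longrightarrow> {u, v} \<in> snd G))"

definition stop_d :: "'a graph \<Rightarrow> nat" where
  "stop_d G = (if snd G = {} then 0 else card (nonisol G) - 1)"

text \<open>Gs i is the graph \<G>_i (i = 1..s), us i is the chosen vertex u_i (i < s).\<close>
definition is_dseq :: "'a graph \<Rightarrow> nat \<Rightarrow> (nat \<Rightarrow> 'a graph) \<Rightarrow> (nat \<Rightarrow> 'a) \<Rightarrow> bool" where
  "is_dseq G s Gs us \<longleftrightarrow> 2 \<le> s \<and> Gs 1 = G \<and>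
     (\<forall>i. 1 \<le> i \<and> i < s \<longrightarrow> \<not> stop_form (Gs i) \<and> us i \<in> nonisol (Gs i) \<and>
                          Gs (Suc i) = dstep (Gs i) (us i)) \<and>
     stop_form (Gs s)"

definition dval :: "nat \<Rightarrow> (nat \<Rightarrow> 'a graph) \<Rightarrow> (nat \<Rightarrow> 'a) \<Rightarrow> nat \<Rightarrow> nat" where
  "dval s Gs us i = (if i < s then deg (Gs i) (us i) else stop_d (Gs s))"

definition mval :: "(nat \<Rightarrow> 'a graph) \<Rightarrow> nat \<Rightarrow> nat" where
  "mval Gs i = card (isolated (Gs i))"

definition yval :: "nat \<Rightarrow> (nat \<Rightarrow> 'a graph) \<Rightarrow> (nat \<Rightarrow> 'a) \<Rightarrow> nat \<Rightarrow> int" where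
  "yval s Gs us j = int (mval Gs j) + 1 - int (dval s Gs us j)"

definition zval :: "nat \<Rightarrow> (nat \<Rightarrow> 'a graph) \<Rightarrow> (nat \<Rightarrow> 'a) \<Rightarrow> nat \<Rightarrow> int" where
  "zval s Gs us i = (\<Sum>j = 2..i. yval s Gs us j)"

definition Zmin :: "nat \<Rightarrow> (nat \<Rightarrow> 'a graph) \<Rightarrow> (nat \<Rightarrow> 'a) \<Rightarrow> int" where
  "Zmin s Gs us = Min (zval s Gs us ` {2..s})"

definition is_cycle :: "'a graph \<Rightarrow> 'a list \<Rightarrow> bool" where
  "is_cycle G xs \<longleftrightarrow> 3 \<le> length xs \<and> distinct xs \<and> set xs \<subseteq> fst G \<and>
     (\<forall>i < length xs. {xs ! i, xs ! ((i + 1) mod length xs)} \<in> snd G)"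

definition is_forest :: "'a graph \<Rightarrow> bool" where
  "is_forest G \<longleftrightarrow> is_graph G \<and> (\<nexists>xs. is_cycle G xs)"

definition pendant_P :: "'a graph \<Rightarrow> 'a set" where
  "pendant_P T = {v \<in> fst T. deg T v = 1 \<and> (\<exists>u. {u, v} \<in> snd T \<and> 2 \<le> deg T u)}"

definition disj_union :: "'a graph \<Rightarrow> 'a graph \<Rightarrow> 'a graph" where
  "disj_union H T = (fst H \<union> fst T, snd H \<union> snd T)"

definition numbering :: "'a graph \<Rightarrow> ('a \<Rightarrow> nat) \<Rightarrow> bool" where
  "numbering G f \<longleftrightarrow> bij_betw f (fst G) {1..card (fst G)}"

definition str_f :: "'a graph \<Rightarrow> ('a \<Rightarrow> nat) \<Rightarrow> nat" where
  "str_f G f = Max {f u + f v | u v. {u, v} \<in> snd G}"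

definition strength :: "'a graph \<Rightarrow> nat" where
  "strength G = (LEAST k. \<exists>f. numbering G f \<and> str_f G f = k)"

end

theory Submission
  imports Defs
begin


lemma bij_by_card:
  assumes "finite A" "inj_on f A" "f ` A \<subseteq> {1..n}" "card A = n"
  shows "bij_betw f A {1..(n::nat)}"
proof -
  have "card (f ` A) = n" using assms card_image by metis
  then have "f ` A = {1..n}" using assms(3) by (simp add: card_subset_eq)
  then show ?thesis using assms(2) by (simp add: bij_betw_def)
qed

lemma bij_card_preimage:
  assumes "bij_betw g S T"
  shows "card {y\<in>S. g y \<in> A} = card (A \<inter> T)"
proof -
  have inj: "inj_on g {y\<in>S. g y \<in> A}"
  proof (rule inj_on_subset[of g S])
    show "inj_on g S" using assms by (simp add: bij_betw_def)
  qed blast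
  have img: "g ` {y\<in>S. g y \<in> A} = A \<inter> T"
  proof
    show "g ` {y\<in>S. g y \<in> A} \<subseteq> A \<inter> T" using assms unfolding bij_betw_def by blast
    show "A \<inter> T \<subseteq> g ` {y\<in>S. g y \<in> A}"
    proof
      fix z assume z: "z \<in> A \<inter> T"
      then have "z \<in> g ` S" using assms unfolding bij_betw_def by blast
      then obtain y where "y \<in> S" "z = g y" by blast
      then show "z \<in> g ` {y\<in>S. g y \<in> A}" using z by blast
    qed
  qed
  show ?thesis using card_image[OF inj] img by simp
qed

lemma rank_exists:
  fixes \<sigma> :: "'a \<Rightarrow> nat"
  assumes "finite S"
  shows "\<exists>g. bij_betw g S {1..card S} \<and> (\<forall>a\<in>S. \<forall>b\<in>S. \<sigma> a < \<sigma> b \<longrightarrow> g a < g b)"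
  using assms
proof (induction "card S" arbitrary: S)
  case 0
  then show ?case by (auto simp: bij_betw_def)
next
  case (Suc n)
  then have "S \<noteq> {}" by auto
  have "Max (\<sigma> ` S) \<in> \<sigma> ` S" using Max_in[of "\<sigma> ` S"] Suc.prems \<open>S \<noteq> {}\<close> by simp
  then obtain m where m: "m \<in> S" "\<sigma> m = Max (\<sigma> ` S)" by (metis imageE)
  have mmax: "\<forall>a\<in>S. \<sigma> a \<le> \<sigma> m" using m Suc.prems by simp
  have cS': "n = card (S - {m})" using Suc.hyps(2) m(1) by simp
  obtain g where g: "bij_betw g (S - {m}) {1..n}"
    "\<forall>a\<in>S-{m}. \<forall>b\<in>S-{m}. \<sigma> a < \<sigma> b \<longrightarrow> g a < g b"
    using Suc.hyps(1)[OF cS'] Suc.prems cS' by auto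
  define g' where "g' = g(m := Suc n)"
  have gr: "a \<in> S - {m} \<Longrightarrow> g a \<in> {1..n}" for a using g(1) by (auto simp: bij_betw_def)
  have "bij_betw g' S {1..card S}"
  proof (rule bij_by_card)
    show "finite S" by fact
    show "inj_on g' S"
    proof (rule inj_onI)
      fix a b assume ab: "a \<in> S" "b \<in> S" "g' a = g' b"
      show "a = b"
      proof (cases "a = m \<or> b = m")
        case True
        have ne: "g' x \<noteq> Suc n" if "x \<in> S" "x \<noteq> m" for x
          using gr[of x] that unfolding g'_def by auto
        have gm: "g' m = Suc n" unfolding g'_def by simp
        show ?thesis
        proof (rule ccontr)
          assume "a \<noteq> b"
          then show False using True ab ne gm by metis
        qed
      next
        case False then show ?thesis using ab g(1) unfolding g'_def bij_betw_def inj_on_def by auto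
      qed
    qed
    show "g' ` S \<subseteq> {1..card S}" using gr Suc.hyps(2) unfolding g'_def by fastforce
    show "card S = card S" ..
  qed
  moreover have "\<forall>a\<in>S. \<forall>b\<in>S. \<sigma> a < \<sigma> b \<longrightarrow> g' a < g' b"
  proof (intro ballI impI)
    fix a b assume ab: "a \<in> S" "b \<in> S" "\<sigma> a < \<sigma> b"
    then have "a \<noteq> m" using mmax by (metis leD)
    show "g' a < g' b"
    proof (cases "b = m")
      case True then show ?thesis using gr[of a] ab \<open>a \<noteq> m\<close> unfolding g'_def by auto
    next
      case False then show ?thesis using g(2) ab \<open>a \<noteq> m\<close> unfolding g'_def by auto
    qed
  qed
  ultimately show ?case by blast
qed



lemma rank_le:
  assumes g: "bij_betw g S {1..n}" "\<forall>a\<in>S. \<forall>b\<in>S. \<sigma> a < \<sigma> b \<longrightarrow> g a < g b"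
    and y: "y \<in> S" and fin: "finite S"
  shows "g y \<le> card {y'\<in>S. \<sigma> y' \<le> (\<sigma> y::nat)}"
proof -
  have "card {y'\<in>S. g y' \<in> {..g y}} = card ({..g y} \<inter> {1..n})" by (rule bij_card_preimage[OF g(1)])
  also have "{..g y} \<inter> {1..n} = {1..g y}"
  proof -
    have "g y \<in> {1..n}" using g(1) y by (auto simp: bij_betw_def)
    then show ?thesis by auto
  qed
  finally have "card {y'\<in>S. g y' \<in> {..g y}} = g y" by simp
  moreover have "{y'\<in>S. g y' \<in> {..g y}} \<subseteq> {y'\<in>S. \<sigma> y' \<le> \<sigma> y}"
    using g(2) y by (auto simp: not_le[symmetric])
  moreover have "finite {y'\<in>S. \<sigma> y' \<le> \<sigma> y}" using fin by simp
  ultimately show ?thesis using card_mono by metis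
qed

lemma rank_ge:
  assumes g: "bij_betw g S {1..n}" "\<forall>a\<in>S. \<forall>b\<in>S. \<sigma> a < \<sigma> b \<longrightarrow> g a < g b"
    and y: "y \<in> S" and fin: "finite S"
  shows "card {y'\<in>S. \<sigma> y' < (\<sigma> y::nat)} \<le> g y - 1"
proof -
  have "card {y'\<in>S. g y' \<in> {..<g y}} = card ({..<g y} \<inter> {1..n})" by (rule bij_card_preimage[OF g(1)])
  also have "{..<g y} \<inter> {1..n} = {1..<g y}"
  proof -
    have "g y \<in> {1..n}" using g(1) y by (auto simp: bij_betw_def)
    then show ?thesis by auto
  qed
  finally have "card {y'\<in>S. g y' \<in> {..<g y}} = g y - 1" by simp
  moreover have "{y'\<in>S. \<sigma> y' < \<sigma> y} \<subseteq> {y'\<in>S. g y' \<in> {..<g y}}"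
    using g(2) y by auto
  moreover have "finite {y'\<in>S. g y' \<in> {..<g y}}" using fin by simp
  ultimately show ?thesis using card_mono by metis
qed

lemma lemmaA:
  fixes V B Tp :: "'a set" and E :: "'a set set" and \<sigma> :: "'a \<Rightarrow> nat"
  assumes fin: "finite V" and VBT: "V = B \<union> Tp" and disj: "B \<inter> Tp = {}"
  and Eok: "\<And>x y. {x,y} \<in> E \<Longrightarrow> x \<noteq> y \<and> x \<in> V \<and> y \<in> V"
  and noTT: "\<And>x y. {x,y} \<in> E \<Longrightarrow> x \<in> Tp \<Longrightarrow> y \<in> Tp \<Longrightarrow> False"
  and TB: "\<And>x y. {x,y} \<in> E \<Longrightarrow> x \<in> Tp \<Longrightarrow> y \<in> B \<Longrightarrow> \<sigma> y \<le> \<sigma> x"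
  and cnt: "\<And>i. card {y\<in>B. \<sigma> y \<le> i} \<le> card {x\<in>Tp. \<sigma> x < i} + 1"
  and bt: "card B \<le> card Tp"
  shows "\<exists>f. bij_betw f V {1..card V} \<and> (\<forall>x y. {x,y} \<in> E \<longrightarrow> f x + f y \<le> card V + 1)
           \<and> (\<forall>x\<in>B. f x \<le> card B) \<and> (\<forall>x\<in>Tp. card B < f x)"
proof -
  have finB: "finite B" and finT: "finite Tp" using fin VBT by auto
  obtain gB where gB: "bij_betw gB B {1..card B}" "\<forall>a\<in>B. \<forall>b\<in>B. \<sigma> a < \<sigma> b \<longrightarrow> gB a < gB b"
    using rank_exists[OF finB] by blast
  obtain gT where gT: "bij_betw gT Tp {1..card Tp}" "\<forall>a\<in>Tp. \<forall>b\<in>Tp. \<sigma> a < \<sigma> b \<longrightarrow> gT a < gT b"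
    using rank_exists[OF finT] by blast
  have cV: "card V = card B + card Tp" using VBT disj finB finT card_Un_disjoint by metis
  define f where "f x = (if x \<in> B then gB x else card V + 1 - gT x)" for x
  have rB: "x \<in> B \<Longrightarrow> gB x \<in> {1..card B}" for x using gB(1) by (auto simp: bij_betw_def)
  have rT: "x \<in> Tp \<Longrightarrow> gT x \<in> {1..card Tp}" for x using gT(1) by (auto simp: bij_betw_def)
  have fB: "x \<in> B \<Longrightarrow> f x = gB x" for x by (simp add: f_def)
  have fT: "x \<in> Tp \<Longrightarrow> f x = card V + 1 - gT x" for x using disj by (auto simp: f_def)
  have "bij_betw f V {1..card V}"
  proof (rule bij_by_card[OF fin])
    show "inj_on f V"
    proof (rule inj_onI)
      fix a b assume ab: "a \<in> V" "b \<in> V" "f a = f b"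
      consider "a \<in> B" "b \<in> B" | "a \<in> B" "b \<in> Tp" | "a \<in> Tp" "b \<in> B" | "a \<in> Tp" "b \<in> Tp"
        using ab VBT by blast
      then show "a = b"
      proof cases
        case 1 then show ?thesis using ab gB(1) fB unfolding bij_betw_def inj_on_def by metis
      next
        case 2
        have "f a \<le> card B" using fB[OF 2(1)] rB[OF 2(1)] by simp
        moreover have "f b > card B" using fT[OF 2(2)] rT[OF 2(2)] cV by (simp, arith)
        ultimately show ?thesis using ab by simp
      next
        case 3
        have "f b \<le> card B" using fB[OF 3(2)] rB[OF 3(2)] by simp
        moreover have "f a > card B" using fT[OF 3(1)] rT[OF 3(1)] cV by (simp, arith)
        ultimately show ?thesis using ab by simp
      next
        case 4
        have "card V + 1 - gT a = card V + 1 - gT b" using ab fT 4 by simp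
        moreover have "gT a \<le> card V" "gT b \<le> card V" using rT 4 cV by force+
        ultimately have "gT a = gT b" by simp
        then show ?thesis using 4 gT(1) unfolding bij_betw_def inj_on_def by metis
      qed
    qed
    show "f ` V \<subseteq> {1..card V}"
    proof
      fix z assume "z \<in> f ` V"
      then obtain x where x: "x \<in> V" "z = f x" by blast
      show "z \<in> {1..card V}"
      proof (cases "x \<in> B")
        case True then show ?thesis using x fB rB cV by force
      next
        case False then have "x \<in> Tp" using x VBT by blast
        then show ?thesis using x fT rT cV by force
      qed
    qed
  qed simp
  moreover have "\<forall>x y. {x,y} \<in> E \<longrightarrow> f x + f y \<le> card V + 1"
  proof (intro allI impI)
    fix x y assume e: "{x,y} \<in> E"
    have TBcase: "f a + f b \<le> card V + 1" if ab: "{a,b} \<in> E" "a \<in> Tp" "b \<in> B" for a b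
    proof -
      have "gB b \<le> card {y'\<in>B. \<sigma> y' \<le> \<sigma> b}" by (rule rank_le[OF gB ab(3) finB])
      also have "\<dots> \<le> card {y'\<in>B. \<sigma> y' \<le> \<sigma> a}"
        using TB[OF ab] finB by (intro card_mono) auto
      also have "\<dots> \<le> card {x\<in>Tp. \<sigma> x < \<sigma> a} + 1" by (rule cnt)
      also have "\<dots> \<le> gT a - 1 + 1" using rank_ge[OF gT ab(2) finT] by simp
      finally have "gB b \<le> gT a" using rT[OF ab(2)] by simp
      then show ?thesis using fB[OF ab(3)] fT[OF ab(2)] rT[OF ab(2)] cV by simp
    qed
    consider "x \<in> B" "y \<in> B" | "x \<in> B" "y \<in> Tp" | "x \<in> Tp" "y \<in> B" | "x \<in> Tp" "y \<in> Tp"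
      using Eok[OF e] VBT by blast
    then show "f x + f y \<le> card V + 1"
    proof cases
      case 1
      have "x \<noteq> y" using Eok[OF e] by simp
      then have "gB x \<noteq> gB y" using 1 gB(1) unfolding bij_betw_def inj_on_def by metis
      then show ?thesis using rB[OF 1(1)] rB[OF 1(2)] fB 1 cV bt by auto
    next
      case 2
      have "{y,x} \<in> E" using e by (simp add: insert_commute)
      then show ?thesis using TBcase[of y x] 2 by simp
    next
      case 3 then show ?thesis using TBcase e by simp
    next
      case 4 then show ?thesis using noTT e by blast
    qed
  qed
  moreover have "\<forall>x\<in>B. f x \<le> card B" using fB rB by auto
  moreover have "\<forall>x\<in>Tp. card B < f x"
  proof
    fix x assume "x \<in> Tp" then show "card B < f x" using fT[of x] rT[of x] cV by force
  qed
  ultimately show ?thesis by blast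
qed



lemma sandwich:
  fixes V1 V2 :: "'a set" and E :: "'a set set"
  assumes fin1: "finite V1" and fin2: "finite V2" and disj: "V1 \<inter> V2 = {}"
    and f1: "bij_betw f1 V1 {1..card V1}" and f2: "bij_betw f2 V2 {1..card V2}"
    and c: "2 * c \<le> card V1"
    and E: "\<And>x y. {x,y} \<in> E \<Longrightarrow>
        (x \<in> V1 \<and> y \<in> V1 \<and> f1 x + f1 y \<le> card V1 + 1 \<and> (f1 x \<le> c \<or> f1 y \<le> c)) \<or>
        (x \<in> V2 \<and> y \<in> V2 \<and> f2 x + f2 y \<le> card V2 + 1) \<or>
        (x \<in> V1 \<and> y \<in> V2 \<and> f1 x \<le> c) \<or> (x \<in> V2 \<and> y \<in> V1 \<and> f1 y \<le> c)"
  shows "\<exists>f. bij_betw f (V1 \<union> V2) {1..card (V1 \<union> V2)} \<and>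
             (\<forall>x y. {x,y} \<in> E \<longrightarrow> f x + f y \<le> card (V1 \<union> V2) + 1)"
proof -
  define p1 where "p1 = card V1"
  define p2 where "p2 = card V2"
  have cV: "card (V1 \<union> V2) = p1 + p2" using card_Un_disjoint fin1 fin2 disj p1_def p2_def by metis
  define f where "f x = (if x \<in> V1 then (if f1 x \<le> c then f1 x else f1 x + p2) else f2 x + c)" for x
  have r1: "x \<in> V1 \<Longrightarrow> 1 \<le> f1 x \<and> f1 x \<le> p1" for x using f1 p1_def by (auto simp: bij_betw_def)
  have r2: "x \<in> V2 \<Longrightarrow> 1 \<le> f2 x \<and> f2 x \<le> p2" for x using f2 p2_def by (auto simp: bij_betw_def)
  have fl: "x \<in> V1 \<Longrightarrow> f1 x \<le> c \<Longrightarrow> f x = f1 x" for x by (simp add: f_def)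
  have fh: "x \<in> V1 \<Longrightarrow> \<not> f1 x \<le> c \<Longrightarrow> f x = f1 x + p2" for x by (simp add: f_def)
  have f2e: "x \<in> V2 \<Longrightarrow> f x = f2 x + c" for x using disj by (auto simp: f_def)
  have cp: "c \<le> p1" using c p1_def by simp
  have cls: "(x \<in> V1 \<and> f1 x \<le> c \<and> f x = f1 x \<and> 1 \<le> f x \<and> f x \<le> c)
      \<or> (x \<in> V2 \<and> f x = f2 x + c \<and> c < f x \<and> f x \<le> c + p2)
      \<or> (x \<in> V1 \<and> \<not> f1 x \<le> c \<and> f x = f1 x + p2 \<and> c + p2 < f x \<and> f x \<le> p1 + p2)"
    if x: "x \<in> V1 \<union> V2" for x
  proof (cases "x \<in> V1")
    case True
    note r = r1[OF True]
    show ?thesis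
    proof (cases "f1 x \<le> c")
      case True
      then show ?thesis using fl[OF \<open>x\<in>V1\<close> True] r \<open>x\<in>V1\<close> by simp
    next
      case False
      then show ?thesis using fh[OF \<open>x\<in>V1\<close> False] r \<open>x\<in>V1\<close> by simp
    qed
  next
    case False then have "x \<in> V2" using x by blast
    then show ?thesis using f2e[OF \<open>x\<in>V2\<close>] r2[OF \<open>x\<in>V2\<close>] by simp
  qed
  have "bij_betw f (V1 \<union> V2) {1..card (V1 \<union> V2)}"
  proof (rule bij_by_card)
    show "finite (V1 \<union> V2)" using fin1 fin2 by simp
    show "f ` (V1 \<union> V2) \<subseteq> {1..card (V1 \<union> V2)}"
    proof
      fix z assume "z \<in> f ` (V1 \<union> V2)"
      then obtain x where x: "x \<in> V1 \<union> V2" "z = f x" by blast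
      show "z \<in> {1..card (V1 \<union> V2)}" using cls[OF x(1)] x(2) cV cp by auto
    qed
    show "inj_on f (V1 \<union> V2)"
    proof (rule inj_onI)
      fix a b assume ab: "a \<in> V1 \<union> V2" "b \<in> V1 \<union> V2" "f a = f b"
      have i1: "inj_on f1 V1" and i2: "inj_on f2 V2" using f1 f2 by (auto simp: bij_betw_def)
      from cls[OF ab(1)] cls[OF ab(2)] ab(3) disj
      have "(a \<in> V1 \<and> b \<in> V1 \<and> f1 a = f1 b) \<or> (a \<in> V2 \<and> b \<in> V2 \<and> f2 a = f2 b)"
        by auto
      then show "a = b" using i1 i2 by (meson inj_onD)
    qed
  qed simp
  moreover have "\<forall>x y. {x,y} \<in> E \<longrightarrow> f x + f y \<le> card (V1 \<union> V2) + 1"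
  proof (intro allI impI)
    fix x y assume e: "{x,y} \<in> E"
    have xy: "x \<in> V1 \<union> V2" "y \<in> V1 \<union> V2" using E[OF e] by auto
    from E[OF e] consider
        "x \<in> V1" "y \<in> V1" "f1 x + f1 y \<le> p1 + 1" "f1 x \<le> c \<or> f1 y \<le> c"
      | "x \<in> V2" "y \<in> V2" "f2 x + f2 y \<le> p2 + 1"
      | "x \<in> V1" "y \<in> V2" "f1 x \<le> c" | "x \<in> V2" "y \<in> V1" "f1 y \<le> c"
      using p1_def p2_def by blast
    then show "f x + f y \<le> card (V1 \<union> V2) + 1"
    proof cases
      case 1 then show ?thesis using cls[OF xy(1)] cls[OF xy(2)] cV disj by auto
    next
      case 2 then show ?thesis using cls[OF xy(1)] cls[OF xy(2)] cV disj c p1_def by auto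
    next
      case 3 then show ?thesis using cls[OF xy(1)] cls[OF xy(2)] cV disj c p1_def by auto
    next
      case 4 then show ?thesis using cls[OF xy(1)] cls[OF xy(2)] cV disj c p1_def by auto
    qed
  qed
  ultimately show ?thesis by blast
qed



definition pathE :: "'a set set \<Rightarrow> 'a list \<Rightarrow> bool" where
  "pathE E xs \<longleftrightarrow> distinct xs \<and> (\<forall>i. Suc i < length xs \<longrightarrow> {xs!i, xs!Suc i} \<in> E)"

lemma cycle_exists:
  assumes fin: "finite V"
    and Eok: "\<And>x y. {x,y} \<in> E \<Longrightarrow> x \<noteq> y \<and> x \<in> V \<and> y \<in> V"
    and deg2: "\<And>x w. {x,w} \<in> E \<Longrightarrow> \<exists>u. {u,x} \<in> E \<and> u \<noteq> w"
    and e: "{a,b} \<in> E"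
  shows "\<exists>xs. is_cycle (V,E) xs"
proof -
  define Ps where "Ps = {xs. pathE E xs \<and> set xs \<subseteq> V \<and> 2 \<le> length xs}"
  have ab: "a \<noteq> b" "a \<in> V" "b \<in> V" using Eok[OF e] by auto
  have p0: "[a,b] \<in> Ps" using ab e unfolding Ps_def pathE_def by (auto simp: less_Suc_eq)
  have bnd: "\<forall>xs. xs \<in> Ps \<longrightarrow> length xs < Suc (card V)"
  proof (intro allI impI)
    fix xs assume "xs \<in> Ps"
    then have "distinct xs" "set xs \<subseteq> V" unfolding Ps_def pathE_def by auto
    then have "length xs \<le> card V" using fin by (metis card_mono distinct_card)
    then show "length xs < Suc (card V)" by simp
  qed
  obtain xs where xs: "xs \<in> Ps" and mx: "\<forall>ys. ys \<in> Ps \<longrightarrow> length ys \<le> length xs"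
    using ex_has_greatest_nat[of "\<lambda>xs. xs \<in> Ps" "[a,b]" length "Suc (card V)"] p0 bnd by blast
  have dxs: "distinct xs" and exs: "\<And>i. Suc i < length xs \<Longrightarrow> {xs!i, xs!Suc i} \<in> E"
    and sxs: "set xs \<subseteq> V" and lxs: "2 \<le> length xs"
    using xs unfolding Ps_def pathE_def by auto
  have e01: "{xs!0, xs!1} \<in> E" using exs[of 0] lxs by simp
  obtain u where u: "{u, xs!0} \<in> E" "u \<noteq> xs!1" using deg2[OF e01] by blast
  have u0: "u \<noteq> xs!0" using Eok[OF u(1)] by simp
  show ?thesis
  proof (cases "u \<in> set xs")
    case False
    have "u # xs \<in> Ps"
      unfolding Ps_def pathE_def
    proof (intro CollectI conjI allI impI)
      show "distinct (u # xs)" using False dxs by simp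
      show "set (u # xs) \<subseteq> V" using sxs Eok[OF u(1)] by simp
      show "2 \<le> length (u # xs)" using lxs by simp
      fix i assume i: "Suc i < length (u # xs)"
      show "{(u # xs) ! i, (u # xs) ! Suc i} \<in> E"
      proof (cases i)
        case 0 then show ?thesis using u(1) by simp
      next
        case (Suc j) then show ?thesis using exs[of j] i by simp
      qed
    qed
    then show ?thesis using mx by fastforce
  next
    case True
    then obtain j where j: "j < length xs" "xs ! j = u" by (metis in_set_conv_nth)
    have j2: "2 \<le> j"
    proof -
      have "j \<noteq> 0" using j u0 by (metis)
      moreover have "j \<noteq> 1" using j u(2) by auto
      ultimately show ?thesis by simp
    qed
    define cs where "cs = take (Suc j) xs"
    have lcs: "length cs = Suc j" using j unfolding cs_def by simp
    have ncs: "i < Suc j \<Longrightarrow> cs ! i = xs ! i" for i unfolding cs_def by simp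
    have "is_cycle (V,E) cs"
      unfolding is_cycle_def fst_conv snd_conv
    proof (intro conjI allI impI)
      show "3 \<le> length cs" using lcs j2 by simp
      show "distinct cs" using dxs unfolding cs_def by simp
      show "set cs \<subseteq> V" using sxs set_take_subset unfolding cs_def by (metis order_trans)
      fix i assume i: "i < length cs"
      show "{cs ! i, cs ! ((i + 1) mod length cs)} \<in> E"
      proof (cases "i = j")
        case True
        have "(i + 1) mod length cs = 0" using True lcs by simp
        then show ?thesis using True ncs[of 0] ncs[of j] j u(1) by (simp add: insert_commute)
      next
        case False
        then have "i < j" using i lcs by simp
        then have "(i + 1) mod length cs = Suc i" using lcs by simp
        then show ?thesis using ncs[of i] ncs[of "Suc i"] \<open>i < j\<close> exs[of i] j by simp
      qed
    qed
    then show ?thesis by blast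
  qed
qed

lemma forest_good:
  assumes "finite V"
    and "\<And>x y. {x,y} \<in> E \<Longrightarrow> x \<noteq> y \<and> x \<in> V \<and> y \<in> V"
    and "\<not> (\<exists>xs. is_cycle (V,E) xs)"
  shows "\<exists>f. bij_betw f V {1..card V} \<and> (\<forall>x y. {x,y} \<in> E \<longrightarrow> f x + f y \<le> card V + 1)"
  using assms
proof (induction "card V" arbitrary: V E rule: less_induct)
  case less
  note fin = less.prems(1) and Eok = less.prems(2) and nocyc = less.prems(3)
  show ?case
  proof (cases "\<exists>a b. {a,b} \<in> E")
    case False
    obtain f where "bij_betw f V {1..card V}"
      using rank_exists[OF fin, of "\<lambda>_. 0::nat"] by blast
    then show ?thesis using False by blast
  next
    case True
    then obtain a b where e: "{a,b} \<in> E" by blast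
    have "\<exists>x w. {x,w} \<in> E \<and> (\<forall>u. {u,x} \<in> E \<longrightarrow> u = w)"
    proof (rule ccontr)
      assume "\<not> ?thesis"
      then have "\<And>x w. {x,w} \<in> E \<Longrightarrow> \<exists>u. {u,x} \<in> E \<and> u \<noteq> w" by blast
      then show False using cycle_exists[OF fin Eok _ e] nocyc by blast
    qed
    then obtain x w where xw: "{x,w} \<in> E" and leaf: "\<And>u. {u,x} \<in> E \<Longrightarrow> u = w" by blast
    have xwV: "x \<noteq> w" "x \<in> V" "w \<in> V" using Eok[OF xw] by auto
    define V' where "V' = V - {x,w}"
    define E' where "E' = {e\<in>E. e \<subseteq> V'}"
    have cV': "card V' = card V - 2" using xwV fin unfolding V'_def by (simp add: card_Diff_subset)
    have c2: "2 \<le> card V"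
    proof -
      have "{x,w} \<subseteq> V" using xwV by simp
      then have "card {x,w} \<le> card V" using fin by (rule card_mono[rotated])
      then show ?thesis using xwV by simp
    qed
    have lt: "card V' < card V" using cV' c2 by simp
    have fin': "finite V'" using fin unfolding V'_def by simp
    have Eok': "\<And>a b. {a,b} \<in> E' \<Longrightarrow> a \<noteq> b \<and> a \<in> V' \<and> b \<in> V'"
      using Eok unfolding E'_def by auto
    have nocyc': "\<not> (\<exists>xs. is_cycle (V',E') xs)"
    proof
      assume "\<exists>xs. is_cycle (V',E') xs"
      then obtain xs where "is_cycle (V',E') xs" by blast
      then have "is_cycle (V,E) xs" unfolding is_cycle_def E'_def V'_def by auto
      then show False using nocyc by blast
    qed
    obtain f' where f': "bij_betw f' V' {1..card V'}"
      and fe': "\<forall>a b. {a,b} \<in> E' \<longrightarrow> f' a + f' b \<le> card V' + 1"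
      using less.hyps[OF lt fin' Eok' nocyc'] by blast
    define f where "f z = (if z = w then 1 else if z = x then card V else f' z + 1)" for z
    have r': "z \<in> V' \<Longrightarrow> 1 \<le> f' z \<and> f' z \<le> card V - 2" for z using f' cV' by (auto simp: bij_betw_def)
    have fw: "f w = 1" and fx: "f x = card V" using xwV unfolding f_def by auto
    have fo: "z \<in> V' \<Longrightarrow> f z = f' z + 1" for z unfolding f_def V'_def by auto
    have "bij_betw f V {1..card V}"
    proof (rule bij_by_card[OF fin])
      show "f ` V \<subseteq> {1..card V}"
      proof
        fix y assume "y \<in> f ` V"
        then obtain z where z: "z \<in> V" "y = f z" by blast
        show "y \<in> {1..card V}"
        proof (cases "z = w \<or> z = x")
          case True then show ?thesis using z fw fx c2 by auto
        next
          case False then have "z \<in> V'" using z unfolding V'_def by auto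
          then show ?thesis using z fo r'[of z] c2 by auto
        qed
      qed
      show "inj_on f V"
      proof (rule inj_onI)
        fix a b assume ab: "a \<in> V" "b \<in> V" "f a = f b"
        have cl: "z \<in> V \<Longrightarrow> (z = w \<and> f z = 1) \<or> (z = x \<and> f z = card V) \<or> (z \<in> V' \<and> 2 \<le> f z \<and> f z \<le> card V - 1 \<and> f z = f' z + 1)" for z
        proof -
          assume z: "z \<in> V"
          show ?thesis
          proof (cases "z = w")
            case True then show ?thesis using fw by simp
          next
            case nw: False
            show ?thesis
            proof (cases "z = x")
              case True then show ?thesis using fx by simp
            next
              case False
              then have zV: "z \<in> V'" using nw z unfolding V'_def by auto
              show ?thesis using fo[OF zV] r'[OF zV] c2 zV by auto
            qed
          qed
        qed
        have i': "inj_on f' V'" using f' by (simp add: bij_betw_def)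
        from cl[OF ab(1)] cl[OF ab(2)] ab(3) c2
        have "a = b \<or> (a \<in> V' \<and> b \<in> V' \<and> f' a = f' b)" by auto
        then show "a = b" using i' by (meson inj_onD)
      qed
    qed simp
    moreover have "\<forall>a b. {a,b} \<in> E \<longrightarrow> f a + f b \<le> card V + 1"
    proof (intro allI impI)
      fix a b assume ab: "{a,b} \<in> E"
      have abV: "a \<noteq> b" "a \<in> V" "b \<in> V" using Eok[OF ab] by auto
      show "f a + f b \<le> card V + 1"
      proof (cases "a = x \<or> b = x")
        case True
        then have "(a = x \<and> b = w) \<or> (b = x \<and> a = w)"
          using leaf[of b] leaf[of a] ab by (auto simp: insert_commute)
        then show ?thesis using fw fx by auto
      next
        case nx: False
        show ?thesis
        proof (cases "a = w \<or> b = w")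
          case True
          then have "(a = w \<and> b \<in> V') \<or> (b = w \<and> a \<in> V')" using nx abV unfolding V'_def by auto
          then show ?thesis
          proof
            assume h: "a = w \<and> b \<in> V'"
            then show ?thesis using fw fo[of b] r'[of b] c2 by auto
          next
            assume h: "b = w \<and> a \<in> V'"
            then show ?thesis using fw fo[of a] r'[of a] c2 by auto
          qed
        next
          case False
          then have "a \<in> V'" "b \<in> V'" using nx abV unfolding V'_def by auto
          then have "{a,b} \<in> E'" using ab unfolding E'_def by auto
          then have "f' a + f' b \<le> card V' + 1" using fe' by blast
          then show ?thesis using fo \<open>a \<in> V'\<close> \<open>b \<in> V'\<close> cV' c2 by auto
        qed
      qed
    qed
    ultimately show ?thesis by blast
  qed
qed



locale dctx =
  fixes H :: "'a graph" and s :: nat and Gs :: "nat \<Rightarrow> 'a graph" and us :: "nat \<Rightarrow> 'a"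
  assumes gH: "is_graph H" and ds: "is_dseq H s Gs us"
    and noiso: "\<And>v. v \<in> fst H \<Longrightarrow> \<exists>u. {u,v} \<in> snd H"
begin

abbreviation "V i \<equiv> fst (Gs i)"
abbreviation "E i \<equiv> snd (Gs i)"

lemma s2: "2 \<le> s" using ds unfolding is_dseq_def by simp
lemma G1: "Gs 1 = H" using ds unfolding is_dseq_def by simp
lemma step: "1 \<le> i \<Longrightarrow> i < s \<Longrightarrow> \<not> stop_form (Gs i) \<and> us i \<in> nonisol (Gs i) \<and> Gs (Suc i) = dstep (Gs i) (us i)"
  using ds unfolding is_dseq_def by simp
lemma stopS: "stop_form (Gs s)" using ds unfolding is_dseq_def by simp

lemma finH: "finite (fst H)" using gH unfolding is_graph_def by simp
lemma EH: "e \<in> snd H \<Longrightarrow> \<exists>a b. e = {a,b} \<and> a \<noteq> b \<and> a \<in> fst H \<and> b \<in> fst H"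
  using gH unfolding is_graph_def by blast
lemma EHpair: "{a,b} \<in> snd H \<Longrightarrow> a \<noteq> b \<and> a \<in> fst H \<and> b \<in> fst H"
  using EH[of "{a,b}"] by (auto simp: doubleton_eq_iff)

lemma VE: "1 \<le> i \<Longrightarrow> i \<le> s \<Longrightarrow> V i \<subseteq> fst H \<and> E i = {e \<in> snd H. e \<subseteq> V i}"
proof (induction i rule: nat_induct_at_least)
  case base
  have "snd H = {e \<in> snd H. e \<subseteq> fst H}" using EH by blast
  then show ?case using G1 by simp
next
  case (Suc i)
  have st: "Gs (Suc i) = dstep (Gs i) (us i)" using step[of i] Suc by simp
  have IH: "V i \<subseteq> fst H" "E i = {e \<in> snd H. e \<subseteq> V i}" using Suc by auto
  have W: "V (Suc i) \<subseteq> V i" using st unfolding dstep_def nonisol_def Let_def by auto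
  have "E (Suc i) = {e \<in> E i. e \<subseteq> V (Suc i)}" using st unfolding dstep_def Let_def by simp
  then show ?case using IH W by auto
qed

lemma Vsub: "1 \<le> i \<Longrightarrow> i \<le> s \<Longrightarrow> V i \<subseteq> fst H" using VE by blast
lemma Eeq: "1 \<le> i \<Longrightarrow> i \<le> s \<Longrightarrow> E i = {e \<in> snd H. e \<subseteq> V i}" using VE by blast

lemma Vnext: "1 \<le> i \<Longrightarrow> i < s \<Longrightarrow> V (Suc i) = nonisol (Gs i) - closed_nbhd (Gs i) (us i)"
  using step[of i] unfolding dstep_def Let_def by simp

lemma Vmono1: "1 \<le> i \<Longrightarrow> i < s \<Longrightarrow> V (Suc i) \<subseteq> V i"
  using Vnext unfolding nonisol_def by auto

lemma Vmono: assumes "1 \<le> j" "j \<le> i" "i \<le> s" shows "V i \<subseteq> V j"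
proof -
  have "j + k \<le> s \<longrightarrow> V (j + k) \<subseteq> V j" for k
  proof (induction k)
    case 0 then show ?case by simp
  next
    case (Suc k)
    show ?case
    proof
      assume h: "j + Suc k \<le> s"
      have a: "V (Suc (j + k)) \<subseteq> V (j + k)" using Vmono1[of "j + k"] assms(1) h by simp
      have b: "V (j + k) \<subseteq> V j" using Suc h by simp
      show "V (j + Suc k) \<subseteq> V j" using a b by simp
    qed
  qed
  from this[of "i - j"] show ?thesis using assms by simp
qed


lemma edgeE: "1 \<le> i \<Longrightarrow> i \<le> s \<Longrightarrow> {a,b} \<in> E i \<longleftrightarrow> {a,b} \<in> snd H \<and> a \<in> V i \<and> b \<in> V i"
  using Eeq by auto

lemma iso_char: "v \<in> isolated (Gs i) \<longleftrightarrow> v \<in> V i \<and> (\<forall>u. {u,v} \<notin> E i)"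
  unfolding isolated_def by simp
lemma nonisol_char: "v \<in> nonisol (Gs i) \<longleftrightarrow> v \<in> V i \<and> (\<exists>u. {u,v} \<in> E i)"
  unfolding nonisol_def isolated_def by auto

definition lev :: "'a \<Rightarrow> nat" where "lev v = Max {i \<in> {1..s}. v \<in> V i}"

lemma lev_props:
  assumes v: "v \<in> fst H"
  shows "1 \<le> lev v \<and> lev v \<le> s \<and> v \<in> V (lev v) \<and> (lev v < s \<longrightarrow> v \<notin> V (Suc (lev v)))"
proof -
  define S where "S = {i \<in> {1..s}. v \<in> V i}"
  have fS: "finite S" unfolding S_def by simp
  have "1 \<in> S" unfolding S_def using G1 v s2 by simp
  then have ne: "S \<noteq> {}" by blast
  have inS: "lev v \<in> S" unfolding lev_def S_def[symmetric] using Max_in[OF fS ne] .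
  have "lev v < s \<longrightarrow> v \<notin> V (Suc (lev v))"
  proof (intro impI notI)
    assume a: "lev v < s" "v \<in> V (Suc (lev v))"
    then have "Suc (lev v) \<in> S" unfolding S_def by simp
    then have "Suc (lev v) \<le> lev v" unfolding lev_def S_def[symmetric] using Max_ge[OF fS] by blast
    then show False by simp
  qed
  then show ?thesis using inS unfolding S_def by simp
qed

lemma lev_eq:
  assumes i: "1 \<le> i" "i \<le> s" and v: "v \<in> V i" and nv: "i < s \<Longrightarrow> v \<notin> V (Suc i)"
  shows "lev v = i"
proof -
  have vH: "v \<in> fst H" using Vsub[OF i] v by blast
  note lp = lev_props[OF vH]
  show ?thesis
  proof (rule ccontr)
    assume ne: "lev v \<noteq> i"
    show False
    proof (cases "lev v < i")
      case True
      then have "V i \<subseteq> V (Suc (lev v))" using Vmono[of "Suc (lev v)" i] i by simp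
      then show False using v lp True i by auto
    next
      case False
      then have "i < lev v" using ne by simp
      then have "V (lev v) \<subseteq> V (Suc i)" using Vmono[of "Suc i" "lev v"] lp by simp
      then show False using nv lp \<open>i < lev v\<close> by auto
    qed
  qed
qed

definition Nb :: "nat \<Rightarrow> 'a set" where "Nb i = {v. {v, us i} \<in> E i}"

lemma closed_eq: "closed_nbhd (Gs i) (us i) = insert (us i) (Nb i)"
  unfolding closed_nbhd_def Nb_def by (auto simp: insert_commute)

lemma decomp:
  assumes "1 \<le> i" "i < s" "v \<in> V i" "v \<notin> V (Suc i)"
  shows "v \<in> isolated (Gs i) \<or> v = us i \<or> v \<in> Nb i"
proof -
  have "v \<notin> nonisol (Gs i) - closed_nbhd (Gs i) (us i)" using Vnext assms by simp
  then show ?thesis using assms(3) closed_eq unfolding nonisol_def by auto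
qed

lemma us_props:
  assumes "1 \<le> i" "i < s"
  shows "us i \<in> V i" "us i \<notin> V (Suc i)" "us i \<notin> isolated (Gs i)" "us i \<notin> Nb i" "lev (us i) = i"
proof -
  have n: "us i \<in> nonisol (Gs i)" using step assms by simp
  then show "us i \<in> V i" unfolding nonisol_def by simp
  show "us i \<notin> V (Suc i)" using Vnext assms closed_eq by simp
  show "us i \<notin> isolated (Gs i)" using n unfolding nonisol_def by simp
  show "us i \<notin> Nb i"
  proof
    assume "us i \<in> Nb i"
    then have "{us i, us i} \<in> snd H" unfolding Nb_def using Eeq assms by auto
    then show False using EHpair by blast
  qed
  show "lev (us i) = i" using lev_eq assms \<open>us i \<in> V i\<close> \<open>us i \<notin> V (Suc i)\<close> by simp
qed

lemma Nb_props:
  assumes "1 \<le> i" "i < s" "v \<in> Nb i"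
  shows "v \<in> V i" "v \<notin> V (Suc i)" "v \<notin> isolated (Gs i)" "v \<noteq> us i" "lev v = i" "v \<in> fst H"
proof -
  have e: "{v, us i} \<in> E i" using assms unfolding Nb_def by simp
  then show vV: "v \<in> V i" using edgeE assms by auto
  show "v \<notin> V (Suc i)" using Vnext assms closed_eq by simp
  show "v \<notin> isolated (Gs i)" using e iso_char by (auto simp: insert_commute)
  show "v \<noteq> us i" using us_props assms by auto
  show "lev v = i" using lev_eq assms vV \<open>v \<notin> V (Suc i)\<close> by simp
  show "v \<in> fst H" using vV Vsub[of i] assms by auto
qed

lemma iso_lev:
  assumes "1 \<le> i" "i \<le> s" "v \<in> isolated (Gs i)"
  shows "lev v = i" "v \<in> fst H" "v \<in> V i"
proof -
  show vV: "v \<in> V i" using assms iso_char by simp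
  have "i < s \<Longrightarrow> v \<notin> V (Suc i)" using Vnext assms unfolding nonisol_def by auto
  then show "lev v = i" using lev_eq assms vV by simp
  show "v \<in> fst H" using vV Vsub[of i] assms by auto
qed

definition Uf :: "nat \<Rightarrow> 'a" where "Uf i = (if i < s then us i else (SOME x. x \<in> nonisol (Gs s)))"
definition isTop :: "'a \<Rightarrow> bool" where "isTop v \<longleftrightarrow> v \<in> isolated (Gs (lev v)) \<or> v = Uf (lev v)"
definition sig :: "'a \<Rightarrow> nat" where "sig v = (if v \<in> isolated (Gs (lev v)) then lev v - 1 else lev v)"
definition TopH where "TopH = {v \<in> fst H. isTop v}"
definition BH where "BH = {v \<in> fst H. \<not> isTop v}"

lemma BH_lev:
  assumes "1 \<le> i" "i < s"
  shows "{v \<in> BH. lev v = i} = Nb i"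
proof
  show "{v \<in> BH. lev v = i} \<subseteq> Nb i"
  proof
    fix v assume v: "v \<in> {v \<in> BH. lev v = i}"
    then have vH: "v \<in> fst H" and l: "lev v = i" and nt: "\<not> isTop v" unfolding BH_def by auto
    have "v \<in> V i" "v \<notin> V (Suc i)" using lev_props[OF vH] l assms by auto
    then have "v \<in> isolated (Gs i) \<or> v = us i \<or> v \<in> Nb i" using decomp assms by simp
    then show "v \<in> Nb i" using nt l assms unfolding isTop_def Uf_def by auto
  qed
  show "Nb i \<subseteq> {v \<in> BH. lev v = i}"
  proof
    fix v assume v: "v \<in> Nb i"
    note np = Nb_props[OF assms v]
    have "\<not> isTop v" using np assms unfolding isTop_def Uf_def by auto
    then show "v \<in> {v \<in> BH. lev v = i}" using np unfolding BH_def by simp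
  qed
qed

lemma BH_levs: "{v \<in> BH. lev v = s} = nonisol (Gs s) - {Uf s}"
proof
  show "{v \<in> BH. lev v = s} \<subseteq> nonisol (Gs s) - {Uf s}"
  proof
    fix v assume v: "v \<in> {v \<in> BH. lev v = s}"
    then have vH: "v \<in> fst H" and l: "lev v = s" and nt: "\<not> isTop v" unfolding BH_def by auto
    have "v \<in> V s" using lev_props[OF vH] l by auto
    then show "v \<in> nonisol (Gs s) - {Uf s}" using nt l unfolding isTop_def nonisol_def by auto
  qed
  show "nonisol (Gs s) - {Uf s} \<subseteq> {v \<in> BH. lev v = s}"
  proof
    fix v assume v: "v \<in> nonisol (Gs s) - {Uf s}"
    then have vV: "v \<in> V s" unfolding nonisol_def by simp
    have l: "lev v = s" using lev_eq[of s v] vV s2 by simp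
    have vH: "v \<in> fst H" using vV Vsub[of s] s2 by auto
    have "\<not> isTop v" using v l unfolding isTop_def nonisol_def by auto
    then show "v \<in> {v \<in> BH. lev v = s}" using vH l unfolding BH_def by simp
  qed
qed

lemma Top_sig:
  assumes "1 \<le> t" "t < s"
  shows "{x \<in> TopH. sig x = t} = insert (us t) (isolated (Gs (Suc t)))"
proof
  show "{x \<in> TopH. sig x = t} \<subseteq> insert (us t) (isolated (Gs (Suc t)))"
  proof
    fix x assume x: "x \<in> {x \<in> TopH. sig x = t}"
    then have xH: "x \<in> fst H" and tp: "isTop x" and sg: "sig x = t" unfolding TopH_def by auto
    note lp = lev_props[OF xH]
    show "x \<in> insert (us t) (isolated (Gs (Suc t)))"
    proof (cases "x \<in> isolated (Gs (lev x))")
      case True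
      then have "lev x = Suc t" using sg assms lp unfolding sig_def by auto
      then show ?thesis using True by simp
    next
      case False
      then have "x = Uf (lev x)" "lev x = t" using tp sg unfolding isTop_def sig_def by auto
      then show ?thesis using assms unfolding Uf_def by simp
    qed
  qed
  show "insert (us t) (isolated (Gs (Suc t))) \<subseteq> {x \<in> TopH. sig x = t}"
  proof
    fix x assume x: "x \<in> insert (us t) (isolated (Gs (Suc t)))"
    show "x \<in> {x \<in> TopH. sig x = t}"
    proof (cases "x = us t")
      case True
      note up = us_props[OF assms]
      have xH: "x \<in> fst H" using True up Vsub[of t] assms by auto
      have "isTop x" "sig x = t" using True up assms unfolding isTop_def sig_def Uf_def by auto
      then show ?thesis using xH unfolding TopH_def by simp
    next
      case False
      then have xi: "x \<in> isolated (Gs (Suc t))" using x by simp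
      note il = iso_lev[OF _ _ xi]
      have "lev x = Suc t" "x \<in> fst H" using il assms by auto
      then have "isTop x" "sig x = t" using xi unfolding isTop_def sig_def by auto
      then show ?thesis using \<open>x \<in> fst H\<close> unfolding TopH_def by simp
    qed
  qed
qed

lemma Top_sig0: "{x \<in> TopH. sig x = 0} = {}"
proof -
  have "False" if x: "x \<in> TopH" "sig x = 0" for x
  proof -
    have xH: "x \<in> fst H" using x unfolding TopH_def by simp
    note lp = lev_props[OF xH]
    show False
    proof (cases "x \<in> isolated (Gs (lev x))")
      case True
      then have "lev x = 1" using x lp unfolding sig_def by auto
      then have "x \<in> isolated H" using True G1 by simp
      then show False using noiso xH unfolding isolated_def by auto
    next
      case False then show False using x lp unfolding sig_def by auto
    qed
  qed
  then show ?thesis by blast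
qed

lemma BH_sig: "v \<in> BH \<Longrightarrow> sig v = lev v"
  unfolding BH_def isTop_def sig_def by auto

lemma finTop: "finite TopH" and finBH: "finite BH"
  unfolding TopH_def BH_def using finH by auto

lemma card_dval_lev:
  assumes "1 \<le> i" "i \<le> s"
  shows "card {v \<in> BH. lev v = i} = dval s Gs us i"
proof (cases "i < s")
  case True
  then show ?thesis using BH_lev[OF assms(1) True] unfolding dval_def deg_def Nb_def by simp
next
  case False
  then have i: "i = s" using assms by simp
  have fK: "finite (nonisol (Gs s))"
  proof (rule finite_subset[OF _ finH])
    show "nonisol (Gs s) \<subseteq> fst H" using Vsub[of s] s2 unfolding nonisol_def by auto
  qed
  have "card (nonisol (Gs s) - {Uf s}) = stop_d (Gs s)"
  proof (cases "E s = {}")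
    case True
    then have "nonisol (Gs s) = {}" using nonisol_char by auto
    then show ?thesis using True unfolding stop_d_def by simp
  next
    case False
    then obtain e where e: "e \<in> E s" by blast
    then have "e \<in> snd H" using Eeq[of s] s2 by auto
    then obtain a b where ab: "e = {a,b}" using EH by blast
    then have "b \<in> nonisol (Gs s)" using e edgeE[of s a b] s2 nonisol_char by auto
    then have "Uf s \<in> nonisol (Gs s)" unfolding Uf_def by (simp add: someI_ex[of "\<lambda>x. x \<in> nonisol (Gs s)"] exI)
    then show ?thesis using False fK unfolding stop_d_def by simp
  qed
  then show ?thesis using i BH_levs unfolding dval_def by simp
qed

lemma card_top_sig:
  assumes "1 \<le> t" "t < s"
  shows "card {x \<in> TopH. sig x = t} = Suc (mval Gs (Suc t))"
proof -
  have sub: "isolated (Gs (Suc t)) \<subseteq> V (Suc t)" unfolding isolated_def by auto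
  have fI: "finite (isolated (Gs (Suc t)))"
    using finite_subset[OF sub] finite_subset[OF Vsub[of "Suc t"] finH] assms by simp
  have "us t \<notin> isolated (Gs (Suc t))" using us_props[OF assms] sub by blast
  then show ?thesis using Top_sig[OF assms] fI unfolding mval_def by simp
qed

lemma HC:
  assumes "1 \<le> t" "t \<le> s"
  shows "int (card {x \<in> TopH. sig x < t}) - int (card {y \<in> BH. sig y \<le> t})
         = zval s Gs us t - int (dval s Gs us 1)"
  using assms
proof (induction t rule: nat_induct_at_least)
  case base
  have a: "{x \<in> TopH. sig x < 1} = {}" using Top_sig0 by auto
  have b: "{y \<in> BH. sig y \<le> 1} = {y \<in> BH. lev y = 1}"
  proof -
    have "y \<in> BH \<Longrightarrow> 1 \<le> lev y" for y using lev_props[of y] unfolding BH_def by auto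
    then show ?thesis using BH_sig by force
  qed
  have z: "zval s Gs us 1 = 0" unfolding zval_def by simp
  have c: "card {y \<in> BH. sig y \<le> 1} = dval s Gs us 1" unfolding b using card_dval_lev[of 1] s2 by simp
  show ?case unfolding a using c z by simp
next
  case (Suc t)
  have ts: "t < s" using Suc by simp
  have IH: "int (card {x \<in> TopH. sig x < t}) - int (card {y \<in> BH. sig y \<le> t})
         = zval s Gs us t - int (dval s Gs us 1)" using Suc ts by simp
  have A: "{x \<in> TopH. sig x < Suc t} = {x \<in> TopH. sig x < t} \<union> {x \<in> TopH. sig x = t}" by auto
  have cA: "card {x \<in> TopH. sig x < Suc t} = card {x \<in> TopH. sig x < t} + card {x \<in> TopH. sig x = t}"
    unfolding A by (rule card_Un_disjoint) (use finTop in auto)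
  have B: "{y \<in> BH. sig y \<le> Suc t} = {y \<in> BH. sig y \<le> t} \<union> {y \<in> BH. lev y = Suc t}"
    using BH_sig by auto
  have cB: "card {y \<in> BH. sig y \<le> Suc t} = card {y \<in> BH. sig y \<le> t} + card {y \<in> BH. lev y = Suc t}"
    unfolding B by (rule card_Un_disjoint) (use finBH BH_sig in auto)
  have z: "zval s Gs us (Suc t) = zval s Gs us t + yval s Gs us (Suc t)"
    unfolding zval_def using Suc.hyps by simp
  have y: "yval s Gs us (Suc t) = int (mval Gs (Suc t)) + 1 - int (dval s Gs us (Suc t))"
    unfolding yval_def by simp
  show ?case using IH cA cB z y card_top_sig[OF Suc.hyps ts] card_dval_lev[of "Suc t"] Suc.prems by simp
qed

lemma L1:
  assumes i: "1 \<le> i" "i \<le> s" and x: "x \<in> V i" and e: "{x,y} \<in> snd H" and y: "y \<notin> V i"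
  shows "y \<in> BH \<and> lev y < i"
proof -
  have yH: "y \<in> fst H" using EHpair e by simp
  define j where "j = lev y"
  note lp = lev_props[OF yH, folded j_def]
  have ji: "j < i"
  proof (rule ccontr)
    assume "\<not> j < i"
    then have "V j \<subseteq> V i" using Vmono[of i j] i lp by simp
    then show False using lp y by auto
  qed
  have js: "j < s" using ji i by simp
  have "V i \<subseteq> V j" using Vmono[of j i] lp i ji by simp
  then have xj: "x \<in> V j" using x by blast
  have ej: "{x,y} \<in> E j" using edgeE[of j x y] lp js e xj by simp
  have yn: "y \<notin> V (Suc j)" using lp js by simp
  have "y \<in> isolated (Gs j) \<or> y = us j \<or> y \<in> Nb j" using decomp[of j y] lp js yn by simp
  moreover have "y \<notin> isolated (Gs j)" using ej iso_char by blast
  moreover have "y \<noteq> us j"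
  proof
    assume "y = us j"
    then have "x \<in> Nb j" using ej unfolding Nb_def by simp
    then have "x \<notin> V (Suc j)" using Nb_props lp js by blast
    moreover have "V i \<subseteq> V (Suc j)" using Vmono[of "Suc j" i] ji i by simp
    ultimately show False using x by blast
  qed
  ultimately have "y \<in> Nb j" by blast
  then have "y \<in> BH" using BH_lev[of j] lp js by blast
  then show ?thesis using ji j_def by simp
qed

lemma NB:
  assumes x: "x \<in> TopH" and e: "{x,y} \<in> snd H"
  shows "y \<in> BH \<and> sig y \<le> sig x"
proof -
  have xH: "x \<in> fst H" using x unfolding TopH_def by simp
  define i where "i = lev x"
  note lp = lev_props[OF xH, folded i_def]
  show ?thesis
  proof (cases "x \<in> isolated (Gs i)")
    case True
    have "y \<notin> V i"
    proof
      assume "y \<in> V i"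
      then have "{y,x} \<in> E i" using edgeE[of i y x] lp e by (simp add: insert_commute)
      then show False using True iso_char by blast
    qed
    then have "y \<in> BH \<and> lev y < i" using L1[of i x y] lp e by simp
    then show ?thesis using BH_sig True i_def unfolding sig_def by auto
  next
    case False
    then have xu: "x = Uf i" and sx: "sig x = i" using x unfolding TopH_def isTop_def sig_def i_def by auto
    show ?thesis
    proof (cases "y \<in> V i")
      case False
      then have "y \<in> BH \<and> lev y < i" using L1[of i x y] lp e by simp
      then show ?thesis using BH_sig sx by auto
    next
      case True
      have exy: "{x,y} \<in> E i" using edgeE[of i x y] lp e True by simp
      show ?thesis
      proof (cases "i < s")
        case True
        then have "x = us i" using xu unfolding Uf_def by simp
        then have "y \<in> Nb i" using exy unfolding Nb_def by (simp add: insert_commute)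
        then have "y \<in> {v \<in> BH. lev v = i}" using BH_lev[of i] lp True by blast
        then show ?thesis using BH_sig sx by auto
      next
        case False
        then have iS: "i = s" using lp by simp
        have "y \<in> V s \<and> (\<exists>u. {u,y} \<in> E s)" using exy iS True by blast
        then have "y \<in> nonisol (Gs s)" using nonisol_char by simp
        moreover have "y \<noteq> Uf s" using xu iS EHpair e by auto
        ultimately have "y \<in> {v \<in> BH. lev v = s}" using BH_levs by blast
        then show ?thesis using BH_sig sx iS by auto
      qed
    qed
  qed
qed
end



lemma strength_eq:
  fixes G :: "'a graph"
  assumes fin: "finite (fst G)" and ne: "fst G \<noteq> {}"
    and noiso: "\<And>v. v \<in> fst G \<Longrightarrow> \<exists>u. {u,v} \<in> snd G"
    and Eok: "\<And>x y. {x,y} \<in> snd G \<Longrightarrow> x \<in> fst G \<and> y \<in> fst G"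
    and f0: "bij_betw f0 (fst G) {1..card (fst G)}"
    and f0b: "\<And>x y. {x,y} \<in> snd G \<Longrightarrow> f0 x + f0 y \<le> card (fst G) + 1"
  shows "strength G = card (fst G) + 1"
proof -
  define p where "p = card (fst G)"
  have p1: "1 \<le> p" using fin ne p_def by (simp add: Suc_leI card_gt_0_iff)
  have finS: "finite {g a + g b | a b. {a,b} \<in> snd G}" if "numbering G g" for g :: "'a \<Rightarrow> nat"
  proof -
    have "{g a + g b | a b. {a,b} \<in> snd G} \<subseteq> (\<lambda>(a,b). g a + g b) ` (fst G \<times> fst G)"
      using Eok by fastforce
    then show ?thesis using fin finite_subset by blast
  qed
  have lower: "p + 1 \<le> str_f G g" if g: "numbering G g" for g
  proof -
    have "p \<in> g ` fst G" using g p1 unfolding numbering_def bij_betw_def p_def by simp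
    then obtain v where v: "v \<in> fst G" "g v = p" by blast
    obtain u where u: "{u,v} \<in> snd G" using noiso[OF v(1)] by blast
    have "u \<in> fst G" using Eok[OF u] by simp
    then have "g u \<ge> 1" using g unfolding numbering_def bij_betw_def by auto
    then have "p + 1 \<le> g u + g v" using v by simp
    also have "g u + g v \<le> str_f G g"
      unfolding str_f_def using finS[OF g] u by (intro Max_ge) blast+
    finally show ?thesis .
  qed
  have ng: "numbering G f0" using f0 unfolding numbering_def .
  have upper: "str_f G f0 \<le> p + 1"
    unfolding str_f_def
  proof (rule Max.boundedI)
    show "finite {f0 a + f0 b | a b. {a,b} \<in> snd G}" using finS[OF ng] .
    obtain v where "v \<in> fst G" using ne by blast
    then obtain u where "{u,v} \<in> snd G" using noiso by blast
    then show "{f0 a + f0 b | a b. {a,b} \<in> snd G} \<noteq> {}" by blast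
    show "\<And>z. z \<in> {f0 a + f0 b | a b. {a,b} \<in> snd G} \<Longrightarrow> z \<le> p + 1"
      using f0b p_def by blast
  qed
  have eq: "str_f G f0 = p + 1" using upper lower[OF ng] by simp
  show ?thesis unfolding strength_def p_def[symmetric]
  proof (rule Least_equality)
    show "\<exists>f. numbering G f \<and> str_f G f = p + 1" using ng eq by blast
    show "\<And>y. \<exists>f. numbering G f \<and> str_f G f = y \<Longrightarrow> p + 1 \<le> y" using lower by blast
  qed
qed


locale tctx =
  fixes T :: "'a graph"
  assumes gT: "is_graph T"
begin

lemma ETpair: "{a,b} \<in> snd T \<Longrightarrow> a \<noteq> b \<and> a \<in> fst T \<and> b \<in> fst T"
proof -
  assume e: "{a,b} \<in> snd T"
  then obtain u v where "{a,b} = {u,v}" "u \<noteq> v" "u \<in> fst T" "v \<in> fst T"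
    using gT unfolding is_graph_def by blast
  then show ?thesis by (auto simp: doubleton_eq_iff)
qed

definition "PT = pendant_P T"
definition "NPT = nbhd_set T PT"
definition sup :: "'a \<Rightarrow> 'a" where "sup v = (SOME w. {w,v} \<in> snd T)"

lemma sup_props:
  assumes v: "v \<in> PT"
  shows "{sup v, v} \<in> snd T" "\<And>u. {u,v} \<in> snd T \<Longrightarrow> u = sup v" "2 \<le> deg T (sup v)" "sup v \<in> NPT"
    "v \<in> fst T" "deg T v = 1"
proof -
  have d1: "card {u. {u,v} \<in> snd T} = 1" and ex: "\<exists>u. {u,v} \<in> snd T \<and> 2 \<le> deg T u"
    and vT: "v \<in> fst T"
    using v unfolding PT_def pendant_P_def deg_def by auto
  obtain w where w: "{u. {u,v} \<in> snd T} = {w}" using card_1_singletonE[OF d1] by blast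
  have uni: "{u,v} \<in> snd T \<longleftrightarrow> u = w" for u using w by blast
  have sw: "sup v = w" unfolding sup_def using uni by simp
  show e: "{sup v, v} \<in> snd T" using uni sw by simp
  show "\<And>u. {u,v} \<in> snd T \<Longrightarrow> u = sup v" using uni sw by simp
  show "2 \<le> deg T (sup v)" using ex uni sw by auto
  show "sup v \<in> NPT" unfolding NPT_def nbhd_set_def using e v ETpair[OF e] by blast
  show "v \<in> fst T" by fact
  show "deg T v = 1" using d1 unfolding deg_def .
qed

lemma PT_NPT: "PT \<inter> NPT = {}"
proof -
  have False if v: "v \<in> PT" "v \<in> NPT" for v
  proof -
    obtain q where q: "q \<in> PT" "{v,q} \<in> snd T" using v(2) unfolding NPT_def nbhd_set_def by blast
    then have "v = sup q" using sup_props(2)[OF q(1)] by blast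
    then have "2 \<le> deg T v" using sup_props(3)[OF q(1)] by simp
    then show False using sup_props(6)[OF v(1)] by simp
  qed
  then show ?thesis by blast
qed

lemma subT: "PT \<subseteq> fst T" "NPT \<subseteq> fst T"
  unfolding PT_def NPT_def pendant_P_def nbhd_set_def by auto

lemma NPT_has: "w \<in> NPT \<Longrightarrow> \<exists>x\<in>PT. sup x = w"
proof -
  assume "w \<in> NPT"
  then obtain x where x: "x \<in> PT" "{w,x} \<in> snd T" unfolding NPT_def nbhd_set_def by blast
  then show ?thesis using sup_props(2)[OF x(1)] by blast
qed

end

theorem mainTheorem8:
  fixes H T :: "'a graph" and s :: nat and Gs :: "nat \<Rightarrow> 'a graph" and us :: "nat \<Rightarrow> 'a"
  assumes "is_graph H" and "fst H \<noteq> {}"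
    and "1 \<le> min_deg H" and "min_deg H \<le> card (fst H) - 2"
    and "is_dseq H s Gs us"
    and "Zmin s Gs us \<le> 0"
    and "is_forest T" and "isolated T = {}" and "3 \<le> card (fst T)"
    and "fst H \<inter> fst T = {}"
    and "int (card (pendant_P T)) - int (card (nbhd_set T (pendant_P T)))
           \<ge> int (dval s Gs us 1) - Zmin s Gs us"
  shows "strength (disj_union H T) = card (fst (disj_union H T)) + 1"
proof -
  note gH = assms(1) and dsq = assms(5) and Zle = assms(6) and HTd = assms(10) and slack = assms(11)
  have gT: "is_graph T" and nocyc: "\<nexists>xs. is_cycle T xs" using assms(7) unfolding is_forest_def by auto
  have finH: "finite (fst H)" and finT: "finite (fst T)" using gH gT unfolding is_graph_def by auto
  have noisoH: "\<exists>u. {u,v} \<in> snd H" if v: "v \<in> fst H" for v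
  proof -
    have "min_deg H \<le> deg H v" unfolding min_deg_def using finH v by (intro Min_le) auto
    then have "card {u. {u,v} \<in> snd H} \<noteq> 0" using assms(3) unfolding deg_def by simp
    then show ?thesis by (metis (no_types, lifting) card.empty empty_Collect_eq)
  qed
  have noisoT: "\<exists>u. {u,v} \<in> snd T" if v: "v \<in> fst T" for v
    using assms(8) v unfolding isolated_def by blast
  interpret D: dctx H s Gs us using gH dsq noisoH by unfold_locales auto
  interpret TT: tctx T using gT by unfold_locales
  define P where "P = TT.PT"
  define NP where "NP = TT.NPT"
  define k where "k = card NP"
  have PNP: "P \<inter> NP = {}" using TT.PT_NPT P_def NP_def by simp
  have PT: "P \<subseteq> fst T" and NPT: "NP \<subseteq> fst T" using TT.subT P_def NP_def by auto
  have finP: "finite P" and finNP: "finite NP" using PT NPT finT finite_subset by auto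
  have slack': "int (dval s Gs us 1) - Zmin s Gs us \<le> int (card P) - int k"
    using slack unfolding P_def NP_def k_def TT.PT_def TT.NPT_def .
  have zge: "Zmin s Gs us \<le> zval s Gs us t" if "1 \<le> t" "t \<le> s" for t
  proof (cases "t = 1")
    case True then show ?thesis using Zle unfolding zval_def by simp
  next
    case False
    then have "t \<in> {2..s}" using that by simp
    then show ?thesis unfolding Zmin_def by (intro Min_le) auto
  qed
  have HCg: "int k + int (card {y \<in> D.BH. D.sig y \<le> t}) \<le> int (card P) + int (card {x \<in> D.TopH. D.sig x < t})"
    if "1 \<le> t" "t \<le> s" for t
    using D.HC[OF that] zge[OF that] slack' by simp
  have kP: "k \<le> card P" using slack' Zle by simp
  have BHsig: "y \<in> D.BH \<Longrightarrow> 1 \<le> D.sig y \<and> D.sig y \<le> s" for y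
    using D.BH_sig D.lev_props unfolding D.BH_def by auto
  have TopHH: "D.TopH \<subseteq> fst H" and BHH: "D.BH \<subseteq> fst H" unfolding D.TopH_def D.BH_def by auto
  have HTU: "fst H = D.BH \<union> D.TopH" "D.BH \<inter> D.TopH = {}" unfolding D.TopH_def D.BH_def by auto
  obtain e where e: "bij_betw e NP {0..<k}" using ex_bij_betw_finite_nat[OF finNP] k_def by blast
  define \<sigma> where "\<sigma> v = (if v \<in> NP then e v else if v \<in> P then e (TT.sup v) else k + D.sig v)" for v
  have sNP: "v \<in> NP \<Longrightarrow> \<sigma> v = e v" for v unfolding \<sigma>_def by simp
  have sP: "v \<in> P \<Longrightarrow> \<sigma> v = e (TT.sup v)" for v using PNP unfolding \<sigma>_def by auto
  have sH: "v \<in> fst H \<Longrightarrow> \<sigma> v = k + D.sig v" for v using PT NPT HTd unfolding \<sigma>_def by auto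
  have supP: "v \<in> P \<Longrightarrow> {TT.sup v, v} \<in> snd T \<and> (\<forall>u. {u,v} \<in> snd T \<longrightarrow> u = TT.sup v) \<and> TT.sup v \<in> NP" for v
    using TT.sup_props unfolding P_def NP_def by blast
  have erng: "w \<in> NP \<Longrightarrow> e w < k" for w using e unfolding bij_betw_def by auto
  define V1 where "V1 = fst H \<union> P \<union> NP"
  define B where "B = NP \<union> D.BH"
  define Tp where "Tp = P \<union> D.TopH"
  define E1 where "E1 = {ed \<in> snd H \<union> snd T. ed \<subseteq> V1}"
  have finV1: "finite V1" unfolding V1_def using finH finP finNP by simp
  have VBT: "V1 = B \<union> Tp" unfolding V1_def B_def Tp_def using HTU by auto
  have BTd: "B \<inter> Tp = {}" unfolding B_def Tp_def using PNP HTU PT NPT HTd TopHH BHH by auto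
  have EH2: "{x,y} \<in> snd H \<Longrightarrow> x \<noteq> y \<and> x \<in> fst H \<and> y \<in> fst H" for x y using D.EHpair by blast
  have ET2: "{x,y} \<in> snd T \<Longrightarrow> x \<noteq> y \<and> x \<in> fst T \<and> y \<in> fst T" for x y using TT.ETpair by blast
  have Eok1: "{x,y} \<in> E1 \<Longrightarrow> x \<noteq> y \<and> x \<in> V1 \<and> y \<in> V1" for x y
    using EH2 ET2 unfolding E1_def by auto
  have noTT: False if ed: "{x,y} \<in> E1" "x \<in> Tp" "y \<in> Tp" for x y
  proof -
    have "{x,y} \<in> snd H \<or> {x,y} \<in> snd T" using ed unfolding E1_def by auto
    then show False
    proof
      assume h: "{x,y} \<in> snd H"
      then have "x \<in> fst H" "y \<in> fst H" using EH2 by auto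
      then have "x \<in> D.TopH" using ed(2) PT HTd unfolding Tp_def by auto
      then have "y \<in> D.BH" using D.NB h by blast
      then show False using ed(3) HTU BHH PT HTd unfolding Tp_def by auto
    next
      assume h: "{x,y} \<in> snd T"
      then have "x \<in> fst T" "y \<in> fst T" using ET2 by auto
      then have xP: "x \<in> P" and yP: "y \<in> P" using ed TopHH HTd unfolding Tp_def by auto
      have "y = TT.sup x" using supP[OF xP] h by (simp add: insert_commute)
      then have "y \<in> NP" using supP[OF xP] by simp
      then show False using yP PNP by blast
    qed
  qed
  have TB: "\<sigma> y \<le> \<sigma> x" if ed: "{x,y} \<in> E1" "x \<in> Tp" "y \<in> B" for x y
  proof -
    have "{x,y} \<in> snd H \<or> {x,y} \<in> snd T" using ed unfolding E1_def by auto
    then show ?thesis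
    proof
      assume h: "{x,y} \<in> snd H"
      then have xyH: "x \<in> fst H" "y \<in> fst H" using EH2 by auto
      then have "x \<in> D.TopH" using ed(2) PT HTd unfolding Tp_def by auto
      then have "D.sig y \<le> D.sig x" using D.NB h by blast
      then show ?thesis using sH xyH by simp
    next
      assume h: "{x,y} \<in> snd T"
      then have "x \<in> fst T" "y \<in> fst T" using ET2 by auto
      then have xP: "x \<in> P" and yNP: "y \<in> NP" using ed TopHH BHH HTd unfolding Tp_def B_def by auto
      have "y = TT.sup x" using supP[OF xP] h by (simp add: insert_commute)
      then show ?thesis using sP[OF xP] sNP[OF yNP] by simp
    qed
  qed
  have finB: "finite B" and finTp: "finite Tp" using finV1 VBT by auto
  have cardB: "card B = k + card D.BH" unfolding B_def k_def
    using finNP D.finBH NPT BHH HTd by (intro card_Un_disjoint) auto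
  have cardTp: "card Tp = card P + card D.TopH" unfolding Tp_def
    using finP D.finTop PT TopHH HTd by (intro card_Un_disjoint) auto
  have BHall: "{y \<in> D.BH. D.sig y \<le> s} = D.BH" using BHsig by auto
  have bt: "card B \<le> card Tp"
  proof -
    have "card {x \<in> D.TopH. D.sig x < s} \<le> card D.TopH" using D.finTop by (intro card_mono) auto
    then show ?thesis using HCg[of s] D.s2 BHall cardB cardTp by simp
  qed
  have cnt: "card {y\<in>B. \<sigma> y \<le> i} \<le> card {x\<in>Tp. \<sigma> x < i} + 1" for i
  proof (cases "i < k")
    case True
    have sub1: "{y\<in>B. \<sigma> y \<le> i} \<subseteq> {y\<in>NP. e y \<in> {..i}}"
    proof
      fix y assume y: "y \<in> {y\<in>B. \<sigma> y \<le> i}"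
      show "y \<in> {y\<in>NP. e y \<in> {..i}}"
      proof (cases "y \<in> NP")
        case True then show ?thesis using y sNP by auto
      next
        case False
        then have "y \<in> fst H" using y BHH unfolding B_def by auto
        then show ?thesis using y sH \<open>i < k\<close> by auto
      qed
    qed
    have c1: "card {y\<in>NP. e y \<in> {..i}} = Suc i"
    proof -
      have "card {y\<in>NP. e y \<in> {..i}} = card ({..i} \<inter> {0..<k})" by (rule bij_card_preimage[OF e])
      also have "{..i} \<inter> {0..<k} = {0..i}" using True by auto
      finally show ?thesis by simp
    qed
    define A where "A = {x \<in> P. e (TT.sup x) < i}"
    have sub2: "A \<subseteq> {x\<in>Tp. \<sigma> x < i}" unfolding A_def Tp_def using sP by auto
    have img: "{0..<i} \<subseteq> (\<lambda>x. e (TT.sup x)) ` A"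
    proof
      fix j assume j: "j \<in> {0..<i}"
      then have "j \<in> e ` NP" using e True unfolding bij_betw_def by auto
      then obtain w where w: "w \<in> NP" "e w = j" by blast
      obtain x where x: "x \<in> TT.PT" "TT.sup x = w" using TT.NPT_has w(1) NP_def by blast
      then have "x \<in> A" unfolding A_def P_def using w j by auto
      then show "j \<in> (\<lambda>x. e (TT.sup x)) ` A" using x w by force
    qed
    have finA: "finite A" unfolding A_def using finP by simp
    have "i \<le> card ((\<lambda>x. e (TT.sup x)) ` A)" using card_mono[OF finite_imageI[OF finA] img] by simp
    also have "\<dots> \<le> card A" by (rule card_image_le[OF finA])
    also have "\<dots> \<le> card {x\<in>Tp. \<sigma> x < i}" using sub2 finTp by (intro card_mono) auto
    finally have "i \<le> card {x\<in>Tp. \<sigma> x < i}" .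
    moreover have "card {y\<in>B. \<sigma> y \<le> i} \<le> Suc i" using card_mono[OF _ sub1] finNP c1 by simp
    ultimately show ?thesis by simp
  next
    case False
    define t where "t = i - k"
    have sub1: "{y\<in>B. \<sigma> y \<le> i} \<subseteq> NP \<union> {y \<in> D.BH. D.sig y \<le> t}"
    proof
      fix y assume y: "y \<in> {y\<in>B. \<sigma> y \<le> i}"
      show "y \<in> NP \<union> {y \<in> D.BH. D.sig y \<le> t}"
      proof (cases "y \<in> NP")
        case True then show ?thesis by simp
      next
        case nn: False
        then have "y \<in> D.BH" "y \<in> fst H" using y BHH unfolding B_def by auto
        then show ?thesis using y sH t_def False by auto
      qed
    qed
    have cL: "card {y\<in>B. \<sigma> y \<le> i} \<le> k + card {y \<in> D.BH. D.sig y \<le> t}"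
    proof -
      have "card {y\<in>B. \<sigma> y \<le> i} \<le> card (NP \<union> {y \<in> D.BH. D.sig y \<le> t})"
        using sub1 finNP D.finBH by (intro card_mono) auto
      also have "\<dots> \<le> card NP + card {y \<in> D.BH. D.sig y \<le> t}" by (rule card_Un_le)
      finally show ?thesis unfolding k_def .
    qed
    have sub2: "P \<union> {x \<in> D.TopH. D.sig x < t} \<subseteq> {x\<in>Tp. \<sigma> x < i}"
    proof
      fix x assume x: "x \<in> P \<union> {x \<in> D.TopH. D.sig x < t}"
      show "x \<in> {x\<in>Tp. \<sigma> x < i}"
      proof (cases "x \<in> P")
        case True
        then have "\<sigma> x < k" using sP supP erng by simp
        then show ?thesis using True False unfolding Tp_def by simp
      next
        case nP: False
        then have "x \<in> D.TopH" "x \<in> fst H" using x TopHH by auto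
        then show ?thesis using x nP sH t_def False unfolding Tp_def by auto
      qed
    qed
    have cR: "card P + card {x \<in> D.TopH. D.sig x < t} \<le> card {x\<in>Tp. \<sigma> x < i}"
    proof -
      have "card (P \<union> {x \<in> D.TopH. D.sig x < t}) = card P + card {x \<in> D.TopH. D.sig x < t}"
        using finP D.finTop PT TopHH HTd by (intro card_Un_disjoint) auto
      moreover have "card (P \<union> {x \<in> D.TopH. D.sig x < t}) \<le> card {x\<in>Tp. \<sigma> x < i}"
        using sub2 finTp by (intro card_mono) auto
      ultimately show ?thesis by simp
    qed
    have key: "k + card {y \<in> D.BH. D.sig y \<le> t} \<le> card P + card {x \<in> D.TopH. D.sig x < t}"
    proof (cases "t = 0")
      case True
      then have "{y \<in> D.BH. D.sig y \<le> t} = {}" using BHsig by fastforce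
      then have "card {y \<in> D.BH. D.sig y \<le> t} = 0" by (simp only: card.empty)
      then show ?thesis using kP by linarith
    next
      case tn: False
      define t' where "t' = min t s"
      have t'1: "1 \<le> t'" "t' \<le> s" using tn D.s2 unfolding t'_def by auto
      have eqB: "{y \<in> D.BH. D.sig y \<le> t} = {y \<in> D.BH. D.sig y \<le> t'}" using BHsig unfolding t'_def by auto
      have "card {x \<in> D.TopH. D.sig x < t'} \<le> card {x \<in> D.TopH. D.sig x < t}"
        using D.finTop unfolding t'_def by (intro card_mono) auto
      then show ?thesis using HCg[OF t'1] eqB by simp
    qed
    show ?thesis using cL cR key by simp
  qed
  obtain f1 where f1all: "bij_betw f1 V1 {1..card V1} \<and>
    (\<forall>x y. {x,y} \<in> E1 \<longrightarrow> f1 x + f1 y \<le> card V1 + 1) \<and>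
    (\<forall>x\<in>B. f1 x \<le> card B) \<and> (\<forall>x\<in>Tp. card B < f1 x)"
    using lemmaA[OF finV1 VBT BTd Eok1 noTT TB cnt bt] by (rule exE)
  have f1: "bij_betw f1 V1 {1..card V1}" using f1all by (rule conjunct1)
  have f1b: "\<forall>x y. {x,y} \<in> E1 \<longrightarrow> f1 x + f1 y \<le> card V1 + 1" using f1all by (rule conjunct1[OF conjunct2])
  have f1B: "\<forall>x\<in>B. f1 x \<le> card B" using f1all by (rule conjunct1[OF conjunct2[OF conjunct2]])
  define V2 where "V2 = fst T - P - NP"
  define E2 where "E2 = {ed \<in> snd T. ed \<subseteq> V2}"
  have finV2: "finite V2" unfolding V2_def using finT by simp
  have Eok2: "{x,y} \<in> E2 \<Longrightarrow> x \<noteq> y \<and> x \<in> V2 \<and> y \<in> V2" for x y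
    using ET2 unfolding E2_def by auto
  have nocyc2: "\<not> (\<exists>xs. is_cycle (V2,E2) xs)"
  proof
    assume "\<exists>xs. is_cycle (V2,E2) xs"
    then obtain xs where "is_cycle (V2,E2) xs" by blast
    then have "is_cycle T xs" unfolding is_cycle_def E2_def V2_def by auto
    then show False using nocyc by blast
  qed
  obtain f2 where f2all: "bij_betw f2 V2 {1..card V2} \<and>
    (\<forall>x y. {x,y} \<in> E2 \<longrightarrow> f2 x + f2 y \<le> card V2 + 1)"
    using forest_good[OF finV2 Eok2 nocyc2] by (rule exE)
  have f2: "bij_betw f2 V2 {1..card V2}" using f2all by (rule conjunct1)
  have f2b: "\<forall>x y. {x,y} \<in> E2 \<longrightarrow> f2 x + f2 y \<le> card V2 + 1" using f2all by (rule conjunct2)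
  have V12: "V1 \<inter> V2 = {}" unfolding V1_def V2_def using HTd by auto
  have cc: "2 * card B \<le> card V1" using VBT BTd finB finTp bt card_Un_disjoint by (metis mult_2 add_left_mono)
  have Ecases: "(x \<in> V1 \<and> y \<in> V1 \<and> f1 x + f1 y \<le> card V1 + 1 \<and> (f1 x \<le> card B \<or> f1 y \<le> card B)) \<or>
        (x \<in> V2 \<and> y \<in> V2 \<and> f2 x + f2 y \<le> card V2 + 1) \<or>
        (x \<in> V1 \<and> y \<in> V2 \<and> f1 x \<le> card B) \<or> (x \<in> V2 \<and> y \<in> V1 \<and> f1 y \<le> card B)"
    if ed: "{x,y} \<in> snd (disj_union H T)" for x y
  proof -
    have ed': "{x,y} \<in> snd H \<or> {x,y} \<in> snd T" using ed unfolding disj_union_def by simp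
    have xyV: "x \<in> V1 \<union> V2" "y \<in> V1 \<union> V2" using ed' EH2 ET2 unfolding V1_def V2_def by auto
    have cross: "u \<in> NP" if c: "u \<in> V1" "v \<in> V2" "{u,v} \<in> snd H \<or> {u,v} \<in> snd T" for u v
    proof -
      have vT: "v \<in> fst T" "v \<notin> P" "v \<notin> NP" using c(2) unfolding V2_def by auto
      have eT: "{u,v} \<in> snd T" using c(3) EH2 vT HTd by blast
      have uT: "u \<in> fst T" using ET2[OF eT] by simp
      then have "u \<in> P \<or> u \<in> NP" using c(1) HTd unfolding V1_def by auto
      moreover have "u \<notin> P"
      proof
        assume uP: "u \<in> P"
        then have "v = TT.sup u" using supP[OF uP] eT by (simp add: insert_commute)
        then show False using supP[OF uP] vT by simp
      qed
      ultimately show ?thesis by simp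
    qed
    consider "x \<in> V1" "y \<in> V1" | "x \<in> V2" "y \<in> V2" | "x \<in> V1" "y \<in> V2" | "x \<in> V2" "y \<in> V1"
      using xyV by blast
    then show ?thesis
    proof cases
      case 1
      then have e1: "{x,y} \<in> E1" using ed' unfolding E1_def by auto
      have "\<not> (x \<in> Tp \<and> y \<in> Tp)" using noTT[OF e1] by blast
      then have "x \<in> B \<or> y \<in> B" using 1 VBT by blast
      then show ?thesis using 1 f1b e1 f1B by blast
    next
      case 2
      have "{x,y} \<in> snd T" using ed' EH2 2 HTd unfolding V2_def by blast
      then have "{x,y} \<in> E2" using 2 unfolding E2_def by simp
      then show ?thesis using 2 f2b by blast
    next
      case 3 then show ?thesis using cross[of x y] ed' f1B unfolding B_def by blast
    next
      case 4
      have "{y,x} \<in> snd H \<or> {y,x} \<in> snd T" using ed' by (simp add: insert_commute)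
      then show ?thesis using 4 cross[of y x] f1B unfolding B_def by blast
    qed
  qed
  obtain f where fall: "bij_betw f (V1 \<union> V2) {1..card (V1 \<union> V2)} \<and>
    (\<forall>x y. {x,y} \<in> snd (disj_union H T) \<longrightarrow> f x + f y \<le> card (V1 \<union> V2) + 1)"
    using sandwich[OF finV1 finV2 V12 f1 f2 cc Ecases] by (rule exE)
  have f: "bij_betw f (V1 \<union> V2) {1..card (V1 \<union> V2)}" using fall by (rule conjunct1)
  have fb: "\<forall>x y. {x,y} \<in> snd (disj_union H T) \<longrightarrow> f x + f y \<le> card (V1 \<union> V2) + 1" using fall by (rule conjunct2)
  have VV: "V1 \<union> V2 = fst (disj_union H T)" unfolding V1_def V2_def disj_union_def using PT NPT by auto
  show ?thesis
  proof (rule strength_eq)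
    show "finite (fst (disj_union H T))" using finH finT unfolding disj_union_def by simp
    show "fst (disj_union H T) \<noteq> {}" using assms(2) unfolding disj_union_def by simp
    show "\<And>v. v \<in> fst (disj_union H T) \<Longrightarrow> \<exists>u. {u,v} \<in> snd (disj_union H T)"
      using noisoH noisoT unfolding disj_union_def by auto
    show "\<And>x y. {x,y} \<in> snd (disj_union H T) \<Longrightarrow> x \<in> fst (disj_union H T) \<and> y \<in> fst (disj_union H T)"
      using EH2 ET2 unfolding disj_union_def by auto
    show "bij_betw f (fst (disj_union H T)) {1..card (fst (disj_union H T))}" using f VV by simp
    show "\<And>x y. {x,y} \<in> snd (disj_union H T) \<Longrightarrow> f x + f y \<le> card (fst (disj_union H T)) + 1"
      using fb VV by simp
  qed
qed

end
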